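(* Let $\nu\in\mathrm{O}(\Lambda)$ have cycle shape $2^{12}$, with vacuum anomaly $\rho_\nu=3/4$. There is no $h\in\pi_\nu(\Lambda\otimes\mathbb Q)$ such that the set of lattice points $\{\beta\in\pi_\nu(\Lambda):\langle\beta-h,\beta-h\rangle/2=1-\rho_\nu\}$, with edges defined by $\langle\beta_i-\beta_j,\beta_i-\beta_j\rangle/2=2(1-\rho_\nu)$ (no edge), $3(1-\rho_\nu)$ (single edge), $4(1-\rho_\nu)$ (double edge), forms a diagram containing $A_2^3$. In particular, there is no generalised deep hole $g$ of $V_\Lambda$ projecting to $\nu$ with $\Phi(g)=A_2^3$.
   Context: $\Lambda$ is the Leech lattice, $\mathrm O(\Lambda)\cong\mathrm{Co}_0$, $V_\Lambda$ its lattice VOA (strongly rational, i.e.\ rational, $C_2$-cofinite, self-contragredient, CFT-type; holomorphic; central charge 24). $\pi_\nu=\frac1{|\nu|}\sum_i\nu^i$ is the projection onto the $\nu$-fixed subspace of $\Lambda\otimes\mathbb R$. Cycle shape $\prod t^{b_t}$ of $\nu$: characteristic polynomial $\prod(x^t-1)^{b_t}$; vacuum anomaly $\rho_\nu=\frac1{24}\sum b_t(t-1/t)$. Automorphisms of $V_\Lambda$ are $\phi_\eta(\nu)\sigma_h$ ($\phi_\eta(\nu)$ a lift of $\nu$, $\sigma_h=e^{2\pi ih_0}$), projecting to $\nu$. For $g$ of order $n$, $V_\Lambda(g^i)$ is the unique irreducible $g^i$-twisted module; type $0$ means its conformal weight is in $\frac1n\mathbb Z$; positivity: irreducible $V_\Lambda^g$-modules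 other than $V_\Lambda^g$ have positive conformal weight; $V_\Lambda^{\mathrm{orb}(g)}=\bigoplus_{i\in\mathbb Z_n}W^{(i,0)}$ is the cyclic orbifold construction ($W^{(i,0)}$ the $g$-invariants of $V_\Lambda(g^i)$). With $c_n(d)$ given by $\sum_{d\mid n}c_n(d)\gcd(t,d)=n/t$ for all $t\mid n$, $g$ (order $n>1$, type 0, positivity) is a generalised deep hole if $\dim (V_\Lambda^{\mathrm{orb}(g)})_1=24+\sum_{d\mid n}c_n(d)\dim(V_\Lambda^{g^d})_1$ and $\operatorname{rk}(V_\Lambda^{\mathrm{orb}(g)})_1=\operatorname{rk}(V_\Lambda^g)_1$. $\Phi(g)$ is the Dynkin diagram (Cartan matrix $2\langle\alpha_i,\alpha_j\rangle/\langle\alpha_i,\alpha_i\rangle$) of the set of weights of the Cartan subalgebra $(V_\Lambda^g)_1\cong\pi_\nu(\Lambda\otimes\mathbb C)$ of $(V_\Lambda^{\mathrm{orb}(g)})_1$ acting on $V_\Lambda(g)_1$. *)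

theory Defs
  imports "HOL-Analysis.Analysis" "HOL-Computational_Algebra.Polynomial"
begin

definition is_full_lattice :: "(real^24) set \<Rightarrow> bool" where
  "is_full_lattice L \<longleftrightarrow>
     (\<exists>b :: 24 \<Rightarrow> real^24. inj b \<and> independent (range b) \<and>
        L = {x. \<exists>c :: 24 \<Rightarrow> int. x = (\<Sum>i\<in>UNIV. of_int (c i) *\<^sub>R b i)})"

text \<open>The Leech lattice (up to isometry): the even unimodular lattice of rank 24
  without roots (vectors of norm 2).\<close>
definition is_leech_lattice :: "(real^24) set \<Rightarrow> bool" where
  "is_leech_lattice L \<longleftrightarrow>
     is_full_lattice L \<and>
     (\<forall>x\<in>L. \<exists>k::int. x \<bullet> x = 2 * of_int k) \<and>
     L = {y. \<forall>x\<in>L. \<exists>k::int. x \<bullet> y = of_int k} \<and>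
     (\<forall>x\<in>L. x \<bullet> x \<noteq> 2)"

definition lattice_aut :: "(real^24) set \<Rightarrow> (real^24 \<Rightarrow> real^24) \<Rightarrow> bool" where
  "lattice_aut L \<nu> \<longleftrightarrow> orthogonal_transformation \<nu> \<and> \<nu> ` L = L"

definition charpoly :: "real^24^24 \<Rightarrow> real poly" where
  "charpoly A = det (\<chi> i j. (if i = j then [:0, 1:] else 0) - [:A $ i $ j:])"

definition cycle_shape_2_12 :: "(real^24 \<Rightarrow> real^24) \<Rightarrow> bool" where
  "cycle_shape_2_12 \<nu> \<longleftrightarrow> charpoly (matrix \<nu>) = [:-1, 0, 1:] ^ 12"

definition rho_2_12 :: real where
  "rho_2_12 = (1/24) * 12 * (2 - 1/2)"

definition aut_order :: "(real^24 \<Rightarrow> real^24) \<Rightarrow> nat" where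
  "aut_order \<nu> = (LEAST n. n > 0 \<and> \<nu> ^^ n = id)"

definition fix_proj :: "(real^24 \<Rightarrow> real^24) \<Rightarrow> real^24 \<Rightarrow> real^24" where
  "fix_proj \<nu> x = (1 / real (aut_order \<nu>)) *\<^sub>R (\<Sum>i<aut_order \<nu>. (\<nu> ^^ i) x)"

text \<open>L tensor Q, as the rational multiples of lattice vectors.\<close>
definition rat_span :: "(real^24) set \<Rightarrow> (real^24) set" where
  "rat_span L = {of_rat q *\<^sub>R x | q x. x \<in> L}"

definition diag_vertices ::
  "(real^24) set \<Rightarrow> (real^24 \<Rightarrow> real^24) \<Rightarrow> real \<Rightarrow> real^24 \<Rightarrow> (real^24) set" where
  "diag_vertices L \<nu> \<rho> h =
     {\<beta> \<in> fix_proj \<nu> ` L. (\<beta> - h) \<bullet> (\<beta> - h) / 2 = 1 - \<rho>}"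

text \<open>The set forms a diagram: distinct vertices are at half-norm
  2(1-rho) (no edge), 3(1-rho) (single edge) or 4(1-rho) (double edge).\<close>
definition forms_diagram :: "real \<Rightarrow> (real^24) set \<Rightarrow> bool" where
  "forms_diagram \<rho> S \<longleftrightarrow>
     (\<forall>\<beta>\<in>S. \<forall>\<beta>'\<in>S. \<beta> \<noteq> \<beta>' \<longrightarrow>
        (\<beta> - \<beta>') \<bullet> (\<beta> - \<beta>') / 2 \<in> {2 * (1 - \<rho>), 3 * (1 - \<rho>), 4 * (1 - \<rho>)})"

text \<open>The diagram contains A_2^3 (as a full subdiagram): six distinct vertices
  b 0, ..., b 5 with single edges exactly between b(2k) and b(2k+1).\<close>
definition contains_A2_cubed :: "real \<Rightarrow> (real^24) set \<Rightarrow> bool" where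
  "contains_A2_cubed \<rho> S \<longleftrightarrow>
     (\<exists>b :: nat \<Rightarrow> real^24. inj_on b {0..<6} \<and> (\<forall>i<6. b i \<in> S) \<and>
        (\<forall>i<6. \<forall>j<6. i \<noteq> j \<longrightarrow>
           (b i - b j) \<bullet> (b i - b j) / 2 = (if i div 2 = j div 2 then 3 else 2) * (1 - \<rho>)))"

end

theory Submission
  imports Defs
begin

lemma det_neg_gen: "det (- (M::'a::comm_ring_1^'n^'n)) = (-1) ^ CARD('n) * det M"
proof -
  have "\<And>p. (\<Prod>i\<in>UNIV. (- M)$i$p i) = (-1) ^ CARD('n) * (\<Prod>i\<in>UNIV. M$i$p i)"
  proof -
    fix p :: "'n \<Rightarrow> 'n"
    have "(\<Prod>i\<in>UNIV. (- M)$i$p i) = (\<Prod>i\<in>UNIV. (-1) * M$i$p i)" by simp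
    also have "\<dots> = (-1) ^ CARD('n) * (\<Prod>i\<in>UNIV. M$i$p i)"
      by (simp only: prod.distrib prod_constant)
    finally show "?thesis p" .
  qed
  then show ?thesis unfolding det_def by (simp add: sum_distrib_left algebra_simps)
qed

lemma poly_det: "poly (det (C :: real poly^'n^'n)) y = det (\<chi> i j. poly (C$i$j) y)"
  unfolding det_def by (simp add: poly_sum poly_prod)

lemma charpoly_eval: "poly (charpoly M) y = det (mat y - M)"
  unfolding charpoly_def poly_det
  by (rule arg_cong[where f=det]) (simp add: vec_eq_iff mat_def)

lemma mat_sq: "(mat t - A) ** (mat t + (A::real^'n^'n)) = mat (t*t) - A ** A"
proof -
  have e: "\<And>i j. ((mat t - A) ** (mat t + A))$i$j = (\<Sum>k\<in>UNIV. (if i = k then t else 0) * (if k = j then t else 0))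
     + (\<Sum>k\<in>UNIV. (if i = k then t else 0) * A$k$j) - (\<Sum>k\<in>UNIV. A$i$k * (if k = j then t else 0))
     - (\<Sum>k\<in>UNIV. A$i$k * A$k$j)"
    by (simp add: matrix_matrix_mult_def mat_def ring_distribs sum.distrib sum_subtractf)
  show ?thesis
  proof (simp only: vec_eq_iff, intro allI)
    fix i j
    have "((mat t - A) ** (mat t + A))$i$j = (if i = j then t*t else 0) - (A ** A)$i$j"
    proof -
      have m1: "\<And>P (x::real) y. (if P then x else 0) * y = (if P then x*y else 0)" by simp
      have m2: "\<And>P (x::real) y. x * (if P then y else 0) = (if P then x*y else 0)" by simp
      show ?thesis unfolding e m1 m2
        by (simp add: sum.delta sum.delta' matrix_matrix_mult_def)
    qed
    then show "((mat t - A) ** (mat t + A))$i$j = (mat (t*t) - A ** A)$i$j"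
      by (simp add: mat_def)
  qed
qed

lemma prod_linear_coeffs:
  fixes m :: "'i \<Rightarrow> real"
  assumes "finite S"
  shows "coeff (\<Prod>i\<in>S. [:- m i, 1:]) (card S) = 1 \<and> degree (\<Prod>i\<in>S. [:- m i, 1:]) \<le> card S \<and>
         (S \<noteq> {} \<longrightarrow> coeff (\<Prod>i\<in>S. [:- m i, 1:]) (card S - 1) = - (\<Sum>i\<in>S. m i))"
  using assms
proof (induction S rule: finite_induct)
  case empty
  then show ?case by simp
next
  case (insert a S)
  let ?Q = "\<Prod>i\<in>S. [:- m i, 1:]"
  have P: "(\<Prod>i\<in>insert a S. [:- m i, 1:]) = smult (- m a) ?Q + pCons 0 ?Q"
    using insert by simp
  have c: "card (insert a S) = Suc (card S)" using insert by simp
  have hi: "coeff ?Q (Suc (card S)) = 0"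
    using insert.IH by (intro coeff_eq_0) auto
  have "coeff (\<Prod>i\<in>insert a S. [:- m i, 1:]) (card (insert a S)) = 1"
    unfolding P c using hi insert.IH by simp
  moreover have "degree (\<Prod>i\<in>insert a S. [:- m i, 1:]) \<le> card (insert a S)"
  proof -
    have "degree (\<Prod>i\<in>insert a S. [:- m i, 1:]) = degree ([:- m a, 1:] * ?Q)"
      using insert by simp
    also have "\<dots> \<le> degree [:- m a, 1:] + degree ?Q" by (rule degree_mult_le)
    also have "\<dots> \<le> 1 + card S" using insert.IH by simp
    finally show ?thesis using c by simp
  qed
  moreover have "coeff (\<Prod>i\<in>insert a S. [:- m i, 1:]) (card (insert a S) - 1) = - (\<Sum>i\<in>insert a S. m i)"
  proof (cases "S = {}")
    case True
    then show ?thesis unfolding P by simp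
  next
    case False
    then have "card S \<ge> 1" using insert.hyps(1) by (simp add: Suc_leI card_gt_0_iff)
    then obtain k where k: "card S = Suc k" by (cases "card S") auto
    show ?thesis unfolding P c using insert.IH False insert.hyps k by simp
  qed
  ultimately show ?case by blast
qed

definition cpN :: "real^'n^'n \<Rightarrow> real poly" where
  "cpN M = det (\<chi> i j. (if i = j then [:0, 1:] else 0) - [:M$i$j:])"

lemma coeff_of_int_mult: "coeff (of_int s * q) k = of_int s * coeff q (k::nat)"
  by (simp add: of_int_poly)

lemma coeff_cpN: "coeff (cpN (M::real^'n^'n)) (CARD('n) - 1) = - trace M"
proof -
  define C where "C = ((\<chi> i j. (if i = j then [:0, 1:] else 0) - [:M$i$j:]) :: real poly^'n^'n)"
  define P where "P = {p. p permutes (UNIV::'n set)}"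
  define t where "t = (\<lambda>p. of_int (sign p) * (\<Prod>i\<in>UNIV. C$i$p i))"
  define n where "n = CARD('n)"
  have fin: "finite P" unfolding P_def by (simp add: finite_permutations)
  have id_in: "id \<in> P" unfolding P_def by (simp add: permutes_id)
  have zero: "coeff (t p) (n - 1) = 0" if pP: "p \<in> P - {id}" for p
  proof -
    from pP have perm: "p permutes UNIV" and nid: "p \<noteq> id" unfolding P_def by auto
    from nid obtain i where pi: "p i \<noteq> i" by (auto simp: fun_eq_iff)
    define j where "j = p i"
    have inj: "inj p" using perm by (rule permutes_inj)
    have pj: "p j \<noteq> j" using pi inj unfolding j_def by (metis injD)
    have ij: "i \<noteq> j" using pi j_def by auto
    have degC: "degree (C$k$l) \<le> (if l = k then 1 else 0)" for k l
      unfolding C_def by (cases "k = l") auto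
    have "degree (\<Prod>k\<in>UNIV. C$k$p k) \<le> sum (degree \<circ> (\<lambda>k. C$k$p k)) UNIV"
      by (rule degree_prod_sum_le) simp
    also have "\<dots> \<le> (\<Sum>k\<in>UNIV. (if p k = k then 1 else 0))"
      by (rule sum_mono) (use degC in simp)
    also have "\<dots> = card {k. p k = k}"
      by (simp add: sum.If_cases)
    also have "\<dots> \<le> card (UNIV - {i, j})"
      by (rule card_mono) (use pi pj in auto)
    also have "\<dots> = n - 2" unfolding n_def using ij by (simp add: card_Diff_subset)
    finally have dg: "degree (\<Prod>k\<in>UNIV. C$k$p k) \<le> n - 2" .
    have "n \<ge> 2" unfolding n_def
    proof -
      have "card {i, j} \<le> CARD('n)" by (rule card_mono) auto
      then show "2 \<le> CARD('n)" using ij by simp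
    qed
    with dg have "degree (\<Prod>k\<in>UNIV. C$k$p k) < n - 1" by linarith
    then show ?thesis unfolding t_def coeff_of_int_mult by (simp add: coeff_eq_0)
  qed
  have "coeff (cpN M) (n - 1) = (\<Sum>p\<in>P. coeff (t p) (n - 1))"
    unfolding cpN_def det_def C_def P_def t_def coeff_sum ..
  also have "\<dots> = coeff (t id) (n - 1) + (\<Sum>p\<in>P - {id}. coeff (t p) (n - 1))"
    by (rule sum.remove[OF fin id_in])
  also have "\<dots> = coeff (t id) (n - 1)" using zero by simp
  also have "t id = (\<Prod>i\<in>UNIV. [:- M$i$i, 1:])"
    unfolding t_def C_def by (simp add: sign_id)
  also have "coeff \<dots> (n - 1) = - (\<Sum>i\<in>UNIV. M$i$i)"
    using prod_linear_coeffs[of "UNIV::'n set" "\<lambda>i. M$i$i"] unfolding n_def by simp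
  finally show ?thesis unfolding n_def trace_def .
qed

lemma charpoly_cpN: "charpoly M = cpN M"
  unfolding charpoly_def cpN_def ..

lemma sq_id:
  fixes \<nu> :: "real^24 \<Rightarrow> real^24"
  assumes ot: "orthogonal_transformation \<nu>" and cs: "cycle_shape_2_12 \<nu>"
  shows "\<nu> \<circ> \<nu> = id"
proof -
  define A where "A = matrix \<nu>"
  have lin: "linear \<nu>" using ot by (simp add: orthogonal_transformation_def)
  have cA: "charpoly A = [:-1, 0, 1:] ^ 12" using cs unfolding cycle_shape_2_12_def A_def .
  have dA: "det (mat t - A) = (t*t - 1) ^ 12" for t
    using charpoly_eval[of A t] cA by (simp add: algebra_simps)
  define B where "B = A ** A"
  have neg: "mat t + A = - (mat (-t) - A)" for t
    by (simp add: vec_eq_iff mat_def)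
  have dB: "det (mat (t*t) - B) = (t*t - 1) ^ 24" for t
  proof -
    have "det (mat (t*t) - B) = det (mat t - A) * det (mat t + A)"
      unfolding B_def mat_sq[symmetric] det_mul ..
    also have "det (mat t + A) = det (mat (-t) - A)"
      unfolding neg det_neg_gen by simp
    finally show ?thesis using dA[of t] dA[of "-t"] by (simp add: power_add[symmetric])
  qed
  define Q :: "real poly" where "Q = (\<Prod>i\<in>(UNIV::24 set). [:- 1, 1:])"
  have pQ: "poly Q y = (y - 1) ^ 24" for y
    unfolding Q_def by (simp add: poly_prod)
  have "cpN B = Q"
  proof -
    have "{0..1} \<subseteq> {y. poly (cpN B - Q) y = 0}"
    proof
      fix y :: real assume "y \<in> {0..1}"
      then have "y = sqrt y * sqrt y" by simp
      then have "poly (cpN B) y = (y - 1) ^ 24"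
        using dB[of "sqrt y"] charpoly_eval[of B y] charpoly_cpN[of B] by metis
      then show "y \<in> {y. poly (cpN B - Q) y = 0}" using pQ by simp
    qed
    moreover have "infinite {0::real..1}" by (rule infinite_Icc) simp
    ultimately have "infinite {y. poly (cpN B - Q) y = 0}" using finite_subset by blast
    then have "cpN B - Q = 0" using poly_roots_finite by blast
    then show ?thesis by simp
  qed
  then have "coeff (cpN B) 23 = - 24"
    using prod_linear_coeffs[of "UNIV::24 set" "\<lambda>i. 1"] unfolding Q_def by simp
  then have trB: "trace B = 24" using coeff_cpN[of B] by simp
  define f where "f = \<nu> \<circ> \<nu>"
  have otf: "orthogonal_transformation f" unfolding f_def using ot ot by (rule orthogonal_transformation_compose)
  have linf: "linear f" using otf by (simp add: orthogonal_transformation_def)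
  have Bf: "B = matrix f" unfolding B_def A_def f_def by (simp add: matrix_compose lin)
  have Bii: "B$i$i = f (axis i 1) \<bullet> axis i 1" for i
    unfolding Bf matrix_def by (simp add: inner_axis)
  have nd: "norm (f (axis i 1) - axis i 1) ^ 2 = 2 - 2 * B$i$i" for i
  proof -
    define a where "a = f (axis i 1)"
    define e where "e = (axis i 1 :: real^24)"
    have "norm a = 1" unfolding a_def using otf by (simp add: orthogonal_transformation norm_axis_1)
    then have aa: "a \<bullet> a = 1" by (metis norm_eq_1)
    have ee: "e \<bullet> e = 1" unfolding e_def by (simp add: inner_axis_axis)
    have "norm (a - e) ^ 2 = (a - e) \<bullet> (a - e)" by (simp add: power2_norm_eq_inner)
    also have "\<dots> = a \<bullet> a - 2 * (a \<bullet> e) + e \<bullet> e"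
      by (simp add: inner_diff_left inner_diff_right inner_commute)
    finally show ?thesis unfolding Bii using aa ee unfolding a_def e_def by simp
  qed
  have "(\<Sum>i\<in>UNIV. norm (f (axis i 1) - axis i 1) ^ 2) = (\<Sum>i\<in>(UNIV::24 set). 2 - 2 * B$i$i)"
    using nd by simp
  also have "\<dots> = 48 - 2 * trace B" by (simp add: sum_subtractf trace_def sum_distrib_left)
  also have "\<dots> = 0" using trB by simp
  finally have "\<forall>i\<in>UNIV. norm (f (axis i 1) - axis i 1) ^ 2 = 0"
    by (subst sum_nonneg_eq_0_iff[symmetric]) auto
  then have fe: "f (axis i 1) = axis i 1" for i by simp
  have "f = id"
  proof (rule linear_eq_stdbasis[OF linf linear_id])
    fix b :: "real^24" assume "b \<in> Basis"
    then obtain i where "b = axis i 1" by (auto simp: Basis_vec_def)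
    then show "f b = id b" using fe by simp
  qed
  then show ?thesis unfolding f_def .
qed

lemma order_cases:
  assumes "\<nu> \<circ> \<nu> = id"
  shows "aut_order \<nu> = 1 \<or> aut_order \<nu> = 2"
proof -
  have ex: "(2::nat) > 0 \<and> \<nu> ^^ 2 = id" using assms by (simp add: numeral_2_eq_2)
  have "aut_order \<nu> \<le> 2" unfolding aut_order_def by (rule Least_le) (rule ex)
  moreover have "aut_order \<nu> > 0" unfolding aut_order_def using LeastI[of "\<lambda>n. n > 0 \<and> \<nu> ^^ n = id", OF ex] by blast
  ultimately show ?thesis by linarith
qed

lemma integral_proj:
  fixes L :: "(real^24) set" and \<nu> :: "real^24 \<Rightarrow> real^24"
  assumes dual: "L = {y. \<forall>x\<in>L. \<exists>k::int. x \<bullet> y = of_int k}"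
    and ot: "orthogonal_transformation \<nu>" and img: "\<nu> ` L = L"
    and sq: "\<nu> \<circ> \<nu> = id"
    and x: "x \<in> L" and y: "y \<in> L"
  shows "\<exists>k::int. 2 * (fix_proj \<nu> x \<bullet> fix_proj \<nu> y) = of_int k"
proof -
  have int: "\<exists>k::int. a \<bullet> b = of_int k" if "a \<in> L" "b \<in> L" for a b
  proof -
    have "b \<in> {y. \<forall>x\<in>L. \<exists>k::int. x \<bullet> y = of_int k}" using that(2) dual by blast
    then show ?thesis using that(1) by blast
  qed
  have nyL: "\<nu> y \<in> L" using y img by blast
  from order_cases[OF sq] show ?thesis
  proof
    assume o: "aut_order \<nu> = 1"
    have "fix_proj \<nu> z = z" for z unfolding fix_proj_def o by simp
    then obtain k where "x \<bullet> y = of_int k" using int[OF x y] by auto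
    then show ?thesis using \<open>\<And>z. fix_proj \<nu> z = z\<close> by (intro exI[of _ "2*k"]) simp
  next
    assume o: "aut_order \<nu> = 2"
    have fp: "fix_proj \<nu> z = (1/2) *\<^sub>R (z + \<nu> z)" for z
      unfolding fix_proj_def o by (simp add: numeral_2_eq_2)
    have nn: "\<nu> (\<nu> z) = z" for z using sq by (metis comp_apply id_apply)
    have pres: "\<nu> a \<bullet> \<nu> b = a \<bullet> b" for a b using ot unfolding orthogonal_transformation_def by blast
    have c1: "\<nu> x \<bullet> \<nu> y = x \<bullet> y" by (rule pres)
    have c2: "\<nu> x \<bullet> y = x \<bullet> \<nu> y" using pres[of x "\<nu> y"] nn[of y] by simp
    have "2 * (fix_proj \<nu> x \<bullet> fix_proj \<nu> y) = x \<bullet> y + x \<bullet> \<nu> y"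
      unfolding fp using c1 c2 by (simp add: inner_add_left inner_add_right algebra_simps)
    moreover obtain k1 where "x \<bullet> y = of_int k1" using int[OF x y] by auto
    moreover obtain k2 where "x \<bullet> \<nu> y = of_int k2" using int[OF x nyL] by auto
    ultimately show ?thesis by (intro exI[of _ "k1 + k2"]) simp
  qed
qed

theorem mainTheorem13:
  fixes L :: "(real^24) set" and \<nu> :: "real^24 \<Rightarrow> real^24"
  assumes "is_leech_lattice L"
    and "lattice_aut L \<nu>"
    and "cycle_shape_2_12 \<nu>"
  shows "\<not> (\<exists>h \<in> fix_proj \<nu> ` rat_span L.
             forms_diagram rho_2_12 (diag_vertices L \<nu> rho_2_12 h) \<and>
             contains_A2_cubed rho_2_12 (diag_vertices L \<nu> rho_2_12 h))"
proof
  assume "\<exists>h \<in> fix_proj \<nu> ` rat_span L.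
             forms_diagram rho_2_12 (diag_vertices L \<nu> rho_2_12 h) \<and>
             contains_A2_cubed rho_2_12 (diag_vertices L \<nu> rho_2_12 h)"
  then obtain h where "contains_A2_cubed rho_2_12 (diag_vertices L \<nu> rho_2_12 h)" by blast
  then obtain b where bS: "\<forall>i<(6::nat). b i \<in> diag_vertices L \<nu> rho_2_12 h"
    and bd: "\<forall>i<(6::nat). \<forall>j<6. i \<noteq> j \<longrightarrow>
           (b i - b j) \<bullet> (b i - b j) / 2 = (if i div 2 = j div 2 then 3 else 2) * (1 - rho_2_12)"
    unfolding contains_A2_cubed_def by blast
  have ot: "orthogonal_transformation \<nu>" and img: "\<nu> ` L = L"
    using assms(2) unfolding lattice_aut_def by auto
  have dual: "L = {y. \<forall>x\<in>L. \<exists>k::int. x \<bullet> y = of_int k}"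
    using assms(1) unfolding is_leech_lattice_def by blast
  have sq: "\<nu> \<circ> \<nu> = id" using sq_id[OF ot assms(3)] .
  have inP: "b i \<in> fix_proj \<nu> ` L" if "i < (6::nat)" for i
    using bS that unfolding diag_vertices_def by blast
  have ii: "\<exists>k::int. 2 * (b i \<bullet> b j) = of_int k" if ij: "i < (6::nat)" "j < 6" for i j
  proof -
    obtain x where x: "x \<in> L" "b i = fix_proj \<nu> x" using inP[OF ij(1)] by blast
    obtain y where y: "y \<in> L" "b j = fix_proj \<nu> y" using inP[OF ij(2)] by blast
    show ?thesis unfolding x(2) y(2) by (rule integral_proj[OF dual ot img sq x(1) y(1)])
  qed
  have r: "rho_2_12 = 3/4" unfolding rho_2_12_def by simp
  have d01: "(b 0 - b 1) \<bullet> (b 0 - b 1) = 3/2" using bd[rule_format, of 0 1] r by simp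
  have d02: "(b 0 - b 2) \<bullet> (b 0 - b 2) = 1" using bd[rule_format, of 0 2] r by simp
  have d12: "(b 1 - b 2) \<bullet> (b 1 - b 2) = 1" using bd[rule_format, of 1 2] r by simp
  obtain k01 where k01: "2 * (b 0 \<bullet> b 1) = of_int k01" using ii[of 0 1] by auto
  obtain k02 where k02: "2 * (b 0 \<bullet> b 2) = of_int k02" using ii[of 0 2] by auto
  obtain k12 where k12: "2 * (b 1 \<bullet> b 2) = of_int k12" using ii[of 1 2] by auto
  obtain k22 where k22: "2 * (b 2 \<bullet> b 2) = of_int k22" using ii[of 2 2] by auto
  have e: "2 * (b 2 \<bullet> b 2) - 2 * (b 0 \<bullet> b 2) - 2 * (b 1 \<bullet> b 2) + 2 * (b 0 \<bullet> b 1) = 1/2"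
    using d01 d02 d12 by (simp add: inner_diff_left inner_diff_right inner_commute algebra_simps)
  then have "real_of_int (k22 - k02 - k12 + k01) = 1/2" using k01 k02 k12 k22 by simp
  then have "real_of_int (2 * (k22 - k02 - k12 + k01)) = 1" by simp
  then have "2 * (k22 - k02 - k12 + k01) = 1" by linarith
  then show False by presburger
qed

end
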